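(* Let $\mathcal{C}$ be an additive category with an automorphism $\Sigma$, let $n\ge 3$, and let $\mathscr{N}$ be a collection of $n$-$\Sigma$-sequences in $\mathcal{C}$ satisfying the axioms (N1)(b), (N2* ) and (N3). Then every $n$-$\Sigma$-sequence in $\mathscr{N}$ is exact.
   Context: $\mathcal{C}$ is an additive category, $\Sigma\colon\mathcal{C}\to\mathcal{C}$ an automorphism, and $n\ge 3$ an integer. An $n$-$\Sigma$-sequence $A_\bullet$ is a diagram $A_1\xrightarrow{\alpha_1}A_2\xrightarrow{\alpha_2}\cdots\xrightarrow{\alpha_{n-1}}A_n\xrightarrow{\alpha_n}\Sigma A_1$ in $\mathcal{C}$. It is exact if for every object $B$ of $\mathcal{C}$ the doubly infinite sequence of abelian groups $\cdots\to\mathrm{Hom}(B,\Sigma^{i-1}A_n)\xrightarrow{(\Sigma^{i-1}\alpha_n)_*}\mathrm{Hom}(B,\Sigma^iA_1)\xrightarrow{(\Sigma^i\alpha_1)_*}\mathrm{Hom}(B,\Sigma^iA_2)\to\cdots\xrightarrow{(\Sigma^i\alpha_{n-1})_*}\mathrm{Hom}(B,\Sigma^iA_n)\xrightarrow{(\Sigma^i\alpha_n)_*}\mathrm{Hom}(B,\Sigma^{i+1}A_1)\to\cdots$ ($i\in\mathbb{Z}$) is exact. The left rotation of $A_\bullet$ is $A_2\xrightarrow{\alpha_2}A_3\to\cdots\xrightarrow{\alpha_n}\Sigma A_1\xrightarrow{(-1)^n\Sigma\alpha_1}\Sigma A_2$. A morphism $A_\bullet\to B_\bullet$ of $n$-$\Sigma$-sequences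 (with $B_\bullet$ having maps $\beta_i$) is a tuple $(\varphi_1,\dots,\varphi_n)$ of morphisms $\varphi_i\colon A_i\to B_i$ with $\varphi_{i+1}\alpha_i=\beta_i\varphi_i$ for $1\le i\le n-1$ and $\Sigma\varphi_1\circ\alpha_n=\beta_n\circ\varphi_n$. Axioms for a collection $\mathscr{N}$ of $n$-$\Sigma$-sequences: (N1)(b): for every object $A$, the trivial sequence $A\xrightarrow{1}A\to0\to\cdots\to0\to\Sigma A$ belongs to $\mathscr{N}$. (N2* ): the left rotation of every sequence in $\mathscr{N}$ belongs to $\mathscr{N}$. (N3): given $A_\bullet,B_\bullet\in\mathscr{N}$ and morphisms $\varphi_1\colon A_1\to B_1$, $\varphi_2\colon A_2\to B_2$ with $\varphi_2\alpha_1=\beta_1\varphi_1$, there exist $\varphi_3,\dots,\varphi_n$ such that $(\varphi_1,\dots,\varphi_n)$ is a morphism of $n$-$\Sigma$-sequences. *)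

theory Defs
  imports Main
begin

record ('o, 'm) addcat =
  Ob   :: "'o set"
  Mor  :: "'m set"
  Dom  :: "'m \<Rightarrow> 'o"
  Cod  :: "'m \<Rightarrow> 'o"
  Comp :: "'m \<Rightarrow> 'm \<Rightarrow> 'm"   (* Comp g f = g \<circ> f *)
  Id   :: "'o \<Rightarrow> 'm"
  Add  :: "'m \<Rightarrow> 'm \<Rightarrow> 'm"
  Neg  :: "'m \<Rightarrow> 'm"
  Zero :: "'o \<Rightarrow> 'o \<Rightarrow> 'm"
  ZObj :: "'o"

definition Hom :: "('o, 'm) addcat \<Rightarrow> 'o \<Rightarrow> 'o \<Rightarrow> 'm set" where
  "Hom C A B = {f \<in> Mor C. Dom C f = A \<and> Cod C f = B}"

definition is_category :: "('o, 'm) addcat \<Rightarrow> bool" where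
  "is_category C \<longleftrightarrow>
     (\<forall>f \<in> Mor C. Dom C f \<in> Ob C \<and> Cod C f \<in> Ob C) \<and>
     (\<forall>A \<in> Ob C. Id C A \<in> Hom C A A) \<and>
     (\<forall>A B D f g. f \<in> Hom C A B \<longrightarrow> g \<in> Hom C B D \<longrightarrow> Comp C g f \<in> Hom C A D) \<and>
     (\<forall>A B f. f \<in> Hom C A B \<longrightarrow> Comp C (Id C B) f = f \<and> Comp C f (Id C A) = f) \<and>
     (\<forall>A B D E f g h. f \<in> Hom C A B \<longrightarrow> g \<in> Hom C B D \<longrightarrow> h \<in> Hom C D E \<longrightarrow>
        Comp C h (Comp C g f) = Comp C (Comp C h g) f)"

definition is_preadditive :: "('o, 'm) addcat \<Rightarrow> bool" where
  "is_preadditive C \<longleftrightarrow> is_category C \<and>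
     (\<forall>A \<in> Ob C. \<forall>B \<in> Ob C.
        Zero C A B \<in> Hom C A B \<and>
        (\<forall>f \<in> Hom C A B. \<forall>g \<in> Hom C A B. Add C f g \<in> Hom C A B) \<and>
        (\<forall>f \<in> Hom C A B. Neg C f \<in> Hom C A B) \<and>
        (\<forall>f \<in> Hom C A B. \<forall>g \<in> Hom C A B. \<forall>h \<in> Hom C A B.
            Add C (Add C f g) h = Add C f (Add C g h)) \<and>
        (\<forall>f \<in> Hom C A B. \<forall>g \<in> Hom C A B. Add C f g = Add C g f) \<and>
        (\<forall>f \<in> Hom C A B. Add C f (Zero C A B) = f) \<and>
        (\<forall>f \<in> Hom C A B. Add C f (Neg C f) = Zero C A B)) \<and>
     (\<forall>A B D f g h. f \<in> Hom C A B \<longrightarrow> g \<in> Hom C A B \<longrightarrow> h \<in> Hom C B D \<longrightarrow>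
        Comp C h (Add C f g) = Add C (Comp C h f) (Comp C h g)) \<and>
     (\<forall>A B D f g h. f \<in> Hom C B D \<longrightarrow> g \<in> Hom C B D \<longrightarrow> h \<in> Hom C A B \<longrightarrow>
        Comp C (Add C f g) h = Add C (Comp C f h) (Comp C g h))"

definition is_zero_object :: "('o, 'm) addcat \<Rightarrow> 'o \<Rightarrow> bool" where
  "is_zero_object C Z \<longleftrightarrow> Z \<in> Ob C \<and>
     (\<forall>A \<in> Ob C. (\<exists>!f. f \<in> Hom C A Z) \<and> (\<exists>!f. f \<in> Hom C Z A))"

definition additive_category :: "('o, 'm) addcat \<Rightarrow> bool" where
  "additive_category C \<longleftrightarrow> is_preadditive C \<and> is_zero_object C (ZObj C) \<and>
     (\<forall>A \<in> Ob C. \<forall>B \<in> Ob C. \<exists>P i1 i2 p1 p2.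
        P \<in> Ob C \<and> i1 \<in> Hom C A P \<and> i2 \<in> Hom C B P \<and> p1 \<in> Hom C P A \<and> p2 \<in> Hom C P B \<and>
        Comp C p1 i1 = Id C A \<and> Comp C p2 i2 = Id C B \<and>
        Comp C p1 i2 = Zero C B A \<and> Comp C p2 i1 = Zero C A B \<and>
        Add C (Comp C i1 p1) (Comp C i2 p2) = Id C P)"

definition automorphism :: "('o, 'm) addcat \<Rightarrow> ('o \<Rightarrow> 'o) \<Rightarrow> ('m \<Rightarrow> 'm) \<Rightarrow> bool" where
  "automorphism C So Sm \<longleftrightarrow>
     bij_betw So (Ob C) (Ob C) \<and> bij_betw Sm (Mor C) (Mor C) \<and>
     (\<forall>A B f. f \<in> Hom C A B \<longrightarrow> Sm f \<in> Hom C (So A) (So B)) \<and>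
     (\<forall>A \<in> Ob C. Sm (Id C A) = Id C (So A)) \<and>
     (\<forall>A B D f g. f \<in> Hom C A B \<longrightarrow> g \<in> Hom C B D \<longrightarrow> Sm (Comp C g f) = Comp C (Sm g) (Sm f)) \<and>
     (\<forall>A B f g. f \<in> Hom C A B \<longrightarrow> g \<in> Hom C A B \<longrightarrow> Sm (Add C f g) = Add C (Sm f) (Sm g))"

definition pow_o :: "('o, 'm) addcat \<Rightarrow> ('o \<Rightarrow> 'o) \<Rightarrow> int \<Rightarrow> 'o \<Rightarrow> 'o" where
  "pow_o C So i = (if 0 \<le> i then So ^^ nat i else inv_into (Ob C) So ^^ nat (- i))"

definition pow_m :: "('o, 'm) addcat \<Rightarrow> ('m \<Rightarrow> 'm) \<Rightarrow> int \<Rightarrow> 'm \<Rightarrow> 'm" where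
  "pow_m C Sm i = (if 0 \<le> i then Sm ^^ nat i else inv_into (Mor C) Sm ^^ nat (- i))"

text \<open>An n-\<Sigma>-sequence A_1 \<rightarrow> ... \<rightarrow> A_n \<rightarrow> \<Sigma>A_1 is a pair of lists (objects, maps),
  both of length n, indexed 0..n-1 (so A_k is the entry k-1).\<close>
type_synonym ('o, 'm) nseq = "'o list \<times> 'm list"

definition is_nseq :: "('o, 'm) addcat \<Rightarrow> ('o \<Rightarrow> 'o) \<Rightarrow> nat \<Rightarrow> ('o, 'm) nseq \<Rightarrow> bool" where
  "is_nseq C So n s \<longleftrightarrow> (case s of (A, \<alpha>) \<Rightarrow>
     length A = n \<and> length \<alpha> = n \<and> (\<forall>k < n. A ! k \<in> Ob C) \<and>
     (\<forall>k. k + 1 < n \<longrightarrow> \<alpha> ! k \<in> Hom C (A ! k) (A ! (k + 1))) \<and>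
     \<alpha> ! (n - 1) \<in> Hom C (A ! (n - 1)) (So (A ! 0)))"

definition exact_at :: "('o, 'm) addcat \<Rightarrow> 'o \<Rightarrow> 'm \<Rightarrow> 'm \<Rightarrow> bool" where
  "exact_at C B f g \<longleftrightarrow>
     {h \<in> Hom C B (Dom C g). Comp C g h = Zero C B (Cod C g)} = (\<lambda>k. Comp C f k) ` Hom C B (Dom C f)"

text \<open>Exactness of the doubly infinite sequence at every term \<Sigma>^i A_k, for every object B.\<close>
definition exact_nseq :: "('o, 'm) addcat \<Rightarrow> ('o \<Rightarrow> 'o) \<Rightarrow> ('m \<Rightarrow> 'm) \<Rightarrow> nat \<Rightarrow> ('o, 'm) nseq \<Rightarrow> bool" where
  "exact_nseq C So Sm n s \<longleftrightarrow> (case s of (A, \<alpha>) \<Rightarrow>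
     (\<forall>B \<in> Ob C. \<forall>i::int.
        exact_at C B (pow_m C Sm (i - 1) (\<alpha> ! (n - 1))) (pow_m C Sm i (\<alpha> ! 0)) \<and>
        (\<forall>k. 1 \<le> k \<and> k < n \<longrightarrow>
           exact_at C B (pow_m C Sm i (\<alpha> ! (k - 1))) (pow_m C Sm i (\<alpha> ! k)))))"

definition left_rotation :: "('o, 'm) addcat \<Rightarrow> ('o \<Rightarrow> 'o) \<Rightarrow> ('m \<Rightarrow> 'm) \<Rightarrow> nat \<Rightarrow> ('o, 'm) nseq \<Rightarrow> ('o, 'm) nseq" where
  "left_rotation C So Sm n s = (case s of (A, \<alpha>) \<Rightarrow>
     (tl A @ [So (A ! 0)],
      tl \<alpha> @ [if even n then Sm (\<alpha> ! 0) else Neg C (Sm (\<alpha> ! 0))]))"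

text \<open>Trivial sequence A --1--> A --> 0 --> ... --> 0 --> \<Sigma>A.\<close>
definition trivial_nseq :: "('o, 'm) addcat \<Rightarrow> ('o \<Rightarrow> 'o) \<Rightarrow> nat \<Rightarrow> 'o \<Rightarrow> ('o, 'm) nseq" where
  "trivial_nseq C So n A =
     ([A, A] @ replicate (n - 2) (ZObj C),
      [Id C A, Zero C A (ZObj C)] @ replicate (n - 3) (Zero C (ZObj C) (ZObj C))
        @ [Zero C (ZObj C) (So A)])"

definition nseq_morphism :: "('o, 'm) addcat \<Rightarrow> ('m \<Rightarrow> 'm) \<Rightarrow> nat \<Rightarrow> ('o, 'm) nseq \<Rightarrow> ('o, 'm) nseq \<Rightarrow> 'm list \<Rightarrow> bool" where
  "nseq_morphism C Sm n s t \<phi> \<longleftrightarrow> (case s of (A, \<alpha>) \<Rightarrow> case t of (B, \<beta>) \<Rightarrow>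
     length \<phi> = n \<and> (\<forall>k < n. \<phi> ! k \<in> Hom C (A ! k) (B ! k)) \<and>
     (\<forall>k. k + 1 < n \<longrightarrow> Comp C (\<phi> ! (k + 1)) (\<alpha> ! k) = Comp C (\<beta> ! k) (\<phi> ! k)) \<and>
     Comp C (Sm (\<phi> ! 0)) (\<alpha> ! (n - 1)) = Comp C (\<beta> ! (n - 1)) (\<phi> ! (n - 1)))"

definition N1b :: "('o, 'm) addcat \<Rightarrow> ('o \<Rightarrow> 'o) \<Rightarrow> nat \<Rightarrow> ('o, 'm) nseq set \<Rightarrow> bool" where
  "N1b C So n N \<longleftrightarrow> (\<forall>A \<in> Ob C. trivial_nseq C So n A \<in> N)"

definition N2star :: "('o, 'm) addcat \<Rightarrow> ('o \<Rightarrow> 'o) \<Rightarrow> ('m \<Rightarrow> 'm) \<Rightarrow> nat \<Rightarrow> ('o, 'm) nseq set \<Rightarrow> bool" where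
  "N2star C So Sm n N \<longleftrightarrow> (\<forall>s \<in> N. left_rotation C So Sm n s \<in> N)"

definition N3 :: "('o, 'm) addcat \<Rightarrow> ('m \<Rightarrow> 'm) \<Rightarrow> nat \<Rightarrow> ('o, 'm) nseq set \<Rightarrow> bool" where
  "N3 C Sm n N \<longleftrightarrow> (\<forall>A \<alpha> B \<beta> \<phi>1 \<phi>2. (A, \<alpha>) \<in> N \<longrightarrow> (B, \<beta>) \<in> N \<longrightarrow>
     \<phi>1 \<in> Hom C (A ! 0) (B ! 0) \<longrightarrow> \<phi>2 \<in> Hom C (A ! 1) (B ! 1) \<longrightarrow>
     Comp C \<phi>2 (\<alpha> ! 0) = Comp C (\<beta> ! 0) \<phi>1 \<longrightarrow>
     (\<exists>\<phi>. nseq_morphism C Sm n (A, \<alpha>) (B, \<beta>) \<phi> \<and> \<phi> ! 0 = \<phi>1 \<and> \<phi> ! 1 = \<phi>2))"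

end

theory Submission
  imports Defs
begin

lemma hom_mor: "f \<in> Hom C A B \<Longrightarrow> f \<in> Mor C" unfolding Hom_def by blast
lemma hom_dom: "f \<in> Hom C A B \<Longrightarrow> Dom C f = A" unfolding Hom_def by blast
lemma hom_cod: "f \<in> Hom C A B \<Longrightarrow> Cod C f = B" unfolding Hom_def by blast
lemma mor_hom: "f \<in> Mor C \<Longrightarrow> f \<in> Hom C (Dom C f) (Cod C f)" unfolding Hom_def by blast

context
  fixes C :: "('o,'m) addcat"
  assumes pa: "is_preadditive C"
begin

lemma cat: "is_category C" using pa unfolding is_preadditive_def by blast

lemma mor_ob: "f \<in> Mor C \<Longrightarrow> Dom C f \<in> Ob C \<and> Cod C f \<in> Ob C"
  using cat unfolding is_category_def by blast

lemma hom_ob: "f \<in> Hom C A B \<Longrightarrow> A \<in> Ob C \<and> B \<in> Ob C"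
  using mor_ob unfolding Hom_def by blast


lemma comp_hom: "f \<in> Hom C A B \<Longrightarrow> g \<in> Hom C B D \<Longrightarrow> Comp C g f \<in> Hom C A D"
  using cat unfolding is_category_def by blast
lemma id_hom: "A \<in> Ob C \<Longrightarrow> Id C A \<in> Hom C A A"
  using cat unfolding is_category_def by blast
lemma id_left: "f \<in> Hom C A B \<Longrightarrow> Comp C (Id C B) f = f"
  using cat unfolding is_category_def by blast
lemma id_right: "f \<in> Hom C A B \<Longrightarrow> Comp C f (Id C A) = f"
  using cat unfolding is_category_def by blast
lemma comp_assoc: "f \<in> Hom C A B \<Longrightarrow> g \<in> Hom C B D \<Longrightarrow> h \<in> Hom C D E \<Longrightarrow>
        Comp C h (Comp C g f) = Comp C (Comp C h g) f"
  using cat unfolding is_category_def by blast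

lemma grp_all: "\<forall>A \<in> Ob C. \<forall>B \<in> Ob C.
        Zero C A B \<in> Hom C A B \<and>
        (\<forall>f \<in> Hom C A B. \<forall>g \<in> Hom C A B. Add C f g \<in> Hom C A B) \<and>
        (\<forall>f \<in> Hom C A B. Neg C f \<in> Hom C A B) \<and>
        (\<forall>f \<in> Hom C A B. \<forall>g \<in> Hom C A B. \<forall>h \<in> Hom C A B.
            Add C (Add C f g) h = Add C f (Add C g h)) \<and>
        (\<forall>f \<in> Hom C A B. \<forall>g \<in> Hom C A B. Add C f g = Add C g f) \<and>
        (\<forall>f \<in> Hom C A B. Add C f (Zero C A B) = f) \<and>
        (\<forall>f \<in> Hom C A B. Add C f (Neg C f) = Zero C A B)"
  by (rule conjunct1[OF conjunct2[OF pa[unfolded is_preadditive_def]]])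

lemma grp: assumes "A \<in> Ob C" "B \<in> Ob C" shows
       "Zero C A B \<in> Hom C A B"
        "(\<forall>f \<in> Hom C A B. \<forall>g \<in> Hom C A B. Add C f g \<in> Hom C A B)"
        "(\<forall>f \<in> Hom C A B. Neg C f \<in> Hom C A B)"
        "(\<forall>f \<in> Hom C A B. \<forall>g \<in> Hom C A B. \<forall>h \<in> Hom C A B.
            Add C (Add C f g) h = Add C f (Add C g h))"
        "(\<forall>f \<in> Hom C A B. \<forall>g \<in> Hom C A B. Add C f g = Add C g f)"
        "(\<forall>f \<in> Hom C A B. Add C f (Zero C A B) = f)"
        "(\<forall>f \<in> Hom C A B. Add C f (Neg C f) = Zero C A B)"
  using bspec[OF bspec[OF grp_all assms(1)] assms(2)] by auto

lemma zero_hom: "A \<in> Ob C \<Longrightarrow> B \<in> Ob C \<Longrightarrow> Zero C A B \<in> Hom C A B"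
  using grp(1) by blast
lemma add_hom: "f \<in> Hom C A B \<Longrightarrow> g \<in> Hom C A B \<Longrightarrow> Add C f g \<in> Hom C A B"
  using grp(2) hom_ob[of f A B] by blast
lemma neg_hom: "f \<in> Hom C A B \<Longrightarrow> Neg C f \<in> Hom C A B"
  using grp(3) hom_ob[of f A B] by blast
lemma add_assoc: "f \<in> Hom C A B \<Longrightarrow> g \<in> Hom C A B \<Longrightarrow> h \<in> Hom C A B \<Longrightarrow>
   Add C (Add C f g) h = Add C f (Add C g h)"
  using grp(4) hom_ob[of f A B] by blast
lemma add_comm: "f \<in> Hom C A B \<Longrightarrow> g \<in> Hom C A B \<Longrightarrow> Add C f g = Add C g f"
  using grp(5) hom_ob[of f A B] by blast
lemma add_zero: "f \<in> Hom C A B \<Longrightarrow> Add C f (Zero C A B) = f"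
  using grp(6) hom_ob[of f A B] by blast
lemma add_neg: "f \<in> Hom C A B \<Longrightarrow> Add C f (Neg C f) = Zero C A B"
  using grp(7) hom_ob[of f A B] by blast
lemma comp_add_left: "f \<in> Hom C A B \<Longrightarrow> g \<in> Hom C A B \<Longrightarrow> h \<in> Hom C B D \<Longrightarrow>
        Comp C h (Add C f g) = Add C (Comp C h f) (Comp C h g)"
  using pa unfolding is_preadditive_def by blast
lemma comp_add_right: "f \<in> Hom C B D \<Longrightarrow> g \<in> Hom C B D \<Longrightarrow> h \<in> Hom C A B \<Longrightarrow>
        Comp C (Add C f g) h = Add C (Comp C f h) (Comp C g h)"
  using pa unfolding is_preadditive_def by blast

lemma add_cancel:
  assumes a: "a \<in> Hom C A B" and b: "b \<in> Hom C A B" and c: "c \<in> Hom C A B"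
    and e: "Add C a b = Add C a c"
  shows "b = c"
proof -
  have na: "Neg C a \<in> Hom C A B" using neg_hom a .
  have z: "Add C (Neg C a) a = Zero C A B" using add_comm[OF na a] add_neg[OF a] by simp
  have "b = Add C (Add C (Neg C a) a) b" using z add_comm[OF b zero_hom] add_zero[OF b] hom_ob[OF a] by simp
  also have "\<dots> = Add C (Neg C a) (Add C a b)" using add_assoc[OF na a b] .
  also have "\<dots> = Add C (Neg C a) (Add C a c)" using e by simp
  also have "\<dots> = Add C (Add C (Neg C a) a) c" using add_assoc[OF na a c] by simp
  also have "\<dots> = c" using z add_comm[OF c zero_hom] add_zero[OF c] hom_ob[OF a] by simp
  finally show ?thesis .
qed

lemma inv_unique: "a \<in> Hom C A B \<Longrightarrow> b \<in> Hom C A B \<Longrightarrow> Add C a b = Zero C A B \<Longrightarrow> b = Neg C a"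
  using add_cancel[of a A B b "Neg C a"] add_neg neg_hom by metis

lemma neg_neg: "a \<in> Hom C A B \<Longrightarrow> Neg C (Neg C a) = a"
  using inv_unique[of "Neg C a" A B a] add_comm add_neg neg_hom by metis

lemma neg_zero: "A \<in> Ob C \<Longrightarrow> B \<in> Ob C \<Longrightarrow> Neg C (Zero C A B) = Zero C A B"
  using inv_unique[of "Zero C A B" A B "Zero C A B"] add_zero zero_hom by metis

lemma neg_eq_zero_iff: "a \<in> Hom C A B \<Longrightarrow> (Neg C a = Zero C A B) = (a = Zero C A B)"
  using neg_neg neg_zero hom_ob by metis

lemma self_add_zero: "a \<in> Hom C A B \<Longrightarrow> Add C a a = a \<Longrightarrow> a = Zero C A B"
  using add_cancel[of a A B a "Zero C A B"] add_zero zero_hom hom_ob by metis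

lemma comp_zero_right: "x \<in> Hom C B D \<Longrightarrow> A \<in> Ob C \<Longrightarrow> Comp C x (Zero C A B) = Zero C A D"
proof -
  assume x: "x \<in> Hom C B D" and A: "A \<in> Ob C"
  have z: "Zero C A B \<in> Hom C A B" using zero_hom A hom_ob[OF x] by blast
  have "Comp C x (Zero C A B) = Comp C x (Add C (Zero C A B) (Zero C A B))" using add_zero[OF z] by simp
  also have "\<dots> = Add C (Comp C x (Zero C A B)) (Comp C x (Zero C A B))" using comp_add_left[OF z z x] .
  finally show ?thesis using self_add_zero comp_hom[OF z x] by metis
qed

lemma comp_zero_left: "x \<in> Hom C A B \<Longrightarrow> D \<in> Ob C \<Longrightarrow> Comp C (Zero C B D) x = Zero C A D"
proof -
  assume x: "x \<in> Hom C A B" and D: "D \<in> Ob C"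
  have z: "Zero C B D \<in> Hom C B D" using zero_hom D hom_ob[OF x] by blast
  have "Comp C (Zero C B D) x = Comp C (Add C (Zero C B D) (Zero C B D)) x" using add_zero[OF z] by simp
  also have "\<dots> = Add C (Comp C (Zero C B D) x) (Comp C (Zero C B D) x)" using comp_add_right[OF z z x] .
  finally show ?thesis using self_add_zero comp_hom[OF x z] by metis
qed

lemma comp_neg_left: "g \<in> Hom C B D \<Longrightarrow> h \<in> Hom C A B \<Longrightarrow> Comp C (Neg C g) h = Neg C (Comp C g h)"
proof -
  assume g: "g \<in> Hom C B D" and h: "h \<in> Hom C A B"
  have "Add C (Comp C g h) (Comp C (Neg C g) h) = Comp C (Add C g (Neg C g)) h"
    using comp_add_right[OF g neg_hom[OF g] h] by simp
  also have "\<dots> = Zero C A D" using add_neg[OF g] comp_zero_left[OF h] hom_ob[OF g] by simp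
  finally show ?thesis using inv_unique comp_hom g h neg_hom by metis
qed

lemma comp_neg_right: "g \<in> Hom C B D \<Longrightarrow> h \<in> Hom C A B \<Longrightarrow> Comp C g (Neg C h) = Neg C (Comp C g h)"
proof -
  assume g: "g \<in> Hom C B D" and h: "h \<in> Hom C A B"
  have "Add C (Comp C g h) (Comp C g (Neg C h)) = Comp C g (Add C h (Neg C h))"
    using comp_add_left[OF h neg_hom[OF h] g] by simp
  also have "\<dots> = Zero C A D" using add_neg[OF h] comp_zero_right[OF g] hom_ob[OF h] by simp
  finally show ?thesis using inv_unique comp_hom g h neg_hom by metis
qed

end

definition PP :: "('o, 'm) addcat \<Rightarrow> 'm \<Rightarrow> 'm \<Rightarrow> bool" where
  "PP C f g \<longleftrightarrow> (\<exists>X Y Z. f \<in> Hom C X Y \<and> g \<in> Hom C Y Z \<and> (\<forall>B\<in>Ob C. exact_at C B f g))"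


context
  fixes C :: "('o,'m) addcat" and So :: "'o \<Rightarrow> 'o" and Sm :: "'m \<Rightarrow> 'm"
  assumes pa: "is_preadditive C" and aut: "automorphism C So Sm"
begin

lemma sm_hom: "f \<in> Hom C A B \<Longrightarrow> Sm f \<in> Hom C (So A) (So B)"
  using aut unfolding automorphism_def by blast
lemma sm_comp: "f \<in> Hom C A B \<Longrightarrow> g \<in> Hom C B D \<Longrightarrow> Sm (Comp C g f) = Comp C (Sm g) (Sm f)"
  using aut unfolding automorphism_def by blast
lemma sm_add: "f \<in> Hom C A B \<Longrightarrow> g \<in> Hom C A B \<Longrightarrow> Sm (Add C f g) = Add C (Sm f) (Sm g)"
  using aut unfolding automorphism_def by blast
lemma sm_id: "A \<in> Ob C \<Longrightarrow> Sm (Id C A) = Id C (So A)"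
  using aut unfolding automorphism_def by blast
lemma so_bij: "bij_betw So (Ob C) (Ob C)" using aut unfolding automorphism_def by blast
lemma sm_bij: "bij_betw Sm (Mor C) (Mor C)" using aut unfolding automorphism_def by blast
lemma so_ob: "A \<in> Ob C \<Longrightarrow> So A \<in> Ob C" using so_bij bij_betwE by blast
lemma so_inj: "A \<in> Ob C \<Longrightarrow> B \<in> Ob C \<Longrightarrow> So A = So B \<Longrightarrow> A = B"
  using so_bij unfolding bij_betw_def inj_on_def by blast
lemma sm_inj: "f \<in> Mor C \<Longrightarrow> g \<in> Mor C \<Longrightarrow> Sm f = Sm g \<Longrightarrow> f = g"
  using sm_bij unfolding bij_betw_def inj_on_def by blast

lemma sm_zero: "A \<in> Ob C \<Longrightarrow> B \<in> Ob C \<Longrightarrow> Sm (Zero C A B) = Zero C (So A) (So B)"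
proof -
  assume A: "A \<in> Ob C" and B: "B \<in> Ob C"
  have z: "Zero C A B \<in> Hom C A B" using zero_hom[OF pa A B] .
  have "Sm (Zero C A B) = Sm (Add C (Zero C A B) (Zero C A B))" using add_zero[OF pa z] by simp
  also have "\<dots> = Add C (Sm (Zero C A B)) (Sm (Zero C A B))" using sm_add[OF z z] .
  finally show ?thesis using self_add_zero[OF pa] sm_hom[OF z] by metis
qed

lemma sm_neg: "f \<in> Hom C A B \<Longrightarrow> Sm (Neg C f) = Neg C (Sm f)"
proof -
  assume f: "f \<in> Hom C A B"
  have "Add C (Sm f) (Sm (Neg C f)) = Sm (Add C f (Neg C f))" using sm_add[OF f neg_hom[OF pa f]] by simp
  also have "\<dots> = Zero C (So A) (So B)" using add_neg[OF pa f] sm_zero hom_ob[OF pa f] by simp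
  finally show ?thesis using inv_unique[OF pa] sm_hom f neg_hom[OF pa] by metis
qed

abbreviation "si \<equiv> inv_into (Mor C) Sm"

lemma si_mor: "f \<in> Mor C \<Longrightarrow> si f \<in> Mor C \<and> Sm (si f) = f"
  using sm_bij by (metis bij_betw_def f_inv_into_f inv_into_into)

lemma si_sm: "f \<in> Mor C \<Longrightarrow> si (Sm f) = f"
  using sm_bij by (metis bij_betw_def inv_into_f_f)

lemma sm_mor: "f \<in> Mor C \<Longrightarrow> Sm f \<in> Mor C" using sm_bij bij_betwE by blast

lemma si_hom: assumes f: "f \<in> Hom C (So A) (So B)" and A: "A \<in> Ob C" and B: "B \<in> Ob C"
  shows "si f \<in> Hom C A B"
proof -
  have k: "si f \<in> Mor C" "Sm (si f) = f" using si_mor[OF hom_mor[OF f]] by blast+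
  have h: "Sm (si f) \<in> Hom C (So (Dom C (si f))) (So (Cod C (si f)))"
    using sm_hom mor_hom[OF k(1)] by blast
  have "So (Dom C (si f)) = So A" "So (Cod C (si f)) = So B"
    using hom_dom[OF h] hom_cod[OF h] k(2) hom_dom[OF f] hom_cod[OF f] by simp_all
  hence "Dom C (si f) = A" "Cod C (si f) = B" using so_inj mor_ob[OF pa k(1)] A B by blast+
  thus ?thesis using k(1) unfolding Hom_def by blast
qed

lemma sm_image_hom: "A \<in> Ob C \<Longrightarrow> B \<in> Ob C \<Longrightarrow> Sm ` Hom C A B = Hom C (So A) (So B)"
proof
  assume A: "A \<in> Ob C" and B: "B \<in> Ob C"
  show "Sm ` Hom C A B \<subseteq> Hom C (So A) (So B)" using sm_hom by blast
  show "Hom C (So A) (So B) \<subseteq> Sm ` Hom C A B"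
  proof
    fix h assume h: "h \<in> Hom C (So A) (So B)"
    have "si h \<in> Hom C A B" using si_hom h A B .
    moreover have "h = Sm (si h)" using si_mor[OF hom_mor[OF h]] by simp
    ultimately show "h \<in> Sm ` Hom C A B" by blast
  qed
qed

lemma shift_exact:
  assumes f: "f \<in> Hom C X Y" and g: "g \<in> Hom C Y Z" and B: "B \<in> Ob C"
  shows "exact_at C (So B) (Sm f) (Sm g) = exact_at C B f g"
proof -
  have X: "X \<in> Ob C" and Y: "Y \<in> Ob C" and Z: "Z \<in> Ob C" using hom_ob[OF pa f] hom_ob[OF pa g] by auto
  have sf: "Sm f \<in> Hom C (So X) (So Y)" and sg: "Sm g \<in> Hom C (So Y) (So Z)" using sm_hom f g by auto
  define S1 where "S1 = {h \<in> Hom C B Y. Comp C g h = Zero C B Z}"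
  define I1 where "I1 = (\<lambda>k. Comp C f k) ` Hom C B X"
  have e1: "exact_at C B f g = (S1 = I1)"
    unfolding exact_at_def S1_def I1_def using hom_dom[OF f] hom_dom[OF g] hom_cod[OF g] by simp
  have e2: "exact_at C (So B) (Sm f) (Sm g) =
      ({h \<in> Hom C (So B) (So Y). Comp C (Sm g) h = Zero C (So B) (So Z)} = (\<lambda>k. Comp C (Sm f) k) ` Hom C (So B) (So X))"
    unfolding exact_at_def using hom_dom[OF sf] hom_dom[OF sg] hom_cod[OF sg] by simp
  have s: "{h \<in> Hom C (So B) (So Y). Comp C (Sm g) h = Zero C (So B) (So Z)} = Sm ` S1"
  proof
    show "{h \<in> Hom C (So B) (So Y). Comp C (Sm g) h = Zero C (So B) (So Z)} \<subseteq> Sm ` S1"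
    proof
      fix h assume h: "h \<in> {h \<in> Hom C (So B) (So Y). Comp C (Sm g) h = Zero C (So B) (So Z)}"
      then obtain k where k: "k \<in> Hom C B Y" "h = Sm k" using sm_image_hom[OF B Y] by blast
      have "Sm (Comp C g k) = Sm (Zero C B Z)" using h k sm_comp[OF k(1) g] sm_zero[OF B Z] by simp
      hence "Comp C g k = Zero C B Z" using sm_inj[OF hom_mor[OF comp_hom[OF pa k(1) g]] hom_mor[OF zero_hom[OF pa B Z]]] by blast
      thus "h \<in> Sm ` S1" using k unfolding S1_def by blast
    qed
    show "Sm ` S1 \<subseteq> {h \<in> Hom C (So B) (So Y). Comp C (Sm g) h = Zero C (So B) (So Z)}"
      unfolding S1_def using sm_hom sm_comp[OF _ g] sm_zero[OF B Z] by fastforce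
  qed
  have i: "(\<lambda>k. Comp C (Sm f) k) ` Hom C (So B) (So X) = Sm ` I1"
  proof -
    have "(\<lambda>k. Comp C (Sm f) k) ` Hom C (So B) (So X) = (\<lambda>k. Comp C (Sm f) k) ` Sm ` Hom C B X"
      using sm_image_hom[OF B X] by simp
    also have "\<dots> = Sm ` I1" unfolding I1_def image_image
      using sm_comp[OF _ f] by (intro image_cong) auto
    finally show ?thesis .
  qed
  have sub1: "S1 \<subseteq> Mor C" unfolding S1_def Hom_def by blast
  have sub2: "I1 \<subseteq> Mor C" unfolding I1_def by (auto intro!: hom_mor[OF comp_hom[OF pa _ f]])
  have "inj_on Sm (Mor C)" using sm_bij bij_betw_def by blast
  hence "(Sm ` S1 = Sm ` I1) = (S1 = I1)" using sub1 sub2 by (metis inj_on_image_eq_iff)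
  thus ?thesis using e1 e2 s i by simp
qed


lemma PP_sm: "PP C f g \<Longrightarrow> PP C (Sm f) (Sm g)"
proof -
  assume "PP C f g"
  then obtain X Y Z where f: "f \<in> Hom C X Y" and g: "g \<in> Hom C Y Z" and ex: "\<forall>B\<in>Ob C. exact_at C B f g"
    unfolding PP_def by blast
  have "\<forall>B\<in>Ob C. exact_at C B (Sm f) (Sm g)"
  proof
    fix B assume B: "B \<in> Ob C"
    obtain B' where "B' \<in> Ob C" "B = So B'" using B so_bij by (metis bij_betw_imp_surj_on imageE)
    thus "exact_at C B (Sm f) (Sm g)" using shift_exact[OF f g] ex by simp
  qed
  thus ?thesis unfolding PP_def using sm_hom f g by blast
qed

lemma PP_si: "PP C f g \<Longrightarrow> PP C (si f) (si g)"
proof -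
  assume "PP C f g"
  then obtain X Y Z where f: "f \<in> Hom C X Y" and g: "g \<in> Hom C Y Z" and ex: "\<forall>B\<in>Ob C. exact_at C B f g"
    unfolding PP_def by blast
  have obs: "X \<in> Ob C" "Y \<in> Ob C" "Z \<in> Ob C" using hom_ob[OF pa f] hom_ob[OF pa g] by auto
  obtain X' where X': "X' \<in> Ob C" "X = So X'" using obs so_bij by (metis bij_betw_imp_surj_on imageE)
  obtain Y' where Y': "Y' \<in> Ob C" "Y = So Y'" using obs so_bij by (metis bij_betw_imp_surj_on imageE)
  obtain Z' where Z': "Z' \<in> Ob C" "Z = So Z'" using obs so_bij by (metis bij_betw_imp_surj_on imageE)
  have f': "si f \<in> Hom C X' Y'" using si_hom f X' Y' by simp
  have g': "si g \<in> Hom C Y' Z'" using si_hom g Y' Z' by simp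
  have "\<forall>B\<in>Ob C. exact_at C B (si f) (si g)"
  proof
    fix B assume B: "B \<in> Ob C"
    have "exact_at C (So B) f g" using ex so_ob B by blast
    thus "exact_at C B (si f) (si g)" using shift_exact[OF f' g' B] si_mor[OF hom_mor[OF f]] si_mor[OF hom_mor[OF g]] by simp
  qed
  thus ?thesis unfolding PP_def using f' g' by blast
qed

lemma PP_pow: "PP C f g \<Longrightarrow> PP C (pow_m C Sm i f) (pow_m C Sm i g)"
proof -
  assume P: "PP C f g"
  have a: "PP C ((Sm ^^ k) f) ((Sm ^^ k) g)" for k
    by (induction k) (auto simp: P PP_sm)
  have b: "PP C ((si ^^ k) f) ((si ^^ k) g)" for k
    by (induction k) (auto simp: P PP_si)
  show ?thesis unfolding pow_m_def using a b by simp
qed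

lemma pow_m_shift: "f \<in> Mor C \<Longrightarrow> pow_m C Sm (i + 1) f = pow_m C Sm i (Sm f)"
proof (cases "0 \<le> i")
  case True
  assume "f \<in> Mor C"
  then show ?thesis using True unfolding pow_m_def
    by (simp add: nat_add_distrib funpow_Suc_right del: funpow.simps)
next
  case False
  assume f: "f \<in> Mor C"
  obtain m where m: "nat (- i) = Suc m" using False by (metis gr0_implies_Suc le_less not_less zero_less_nat_eq neg_0_less_iff_less)
  have m2: "nat (- (i+1)) = m" using m by simp
  have "(si ^^ Suc m) (Sm f) = (si ^^ m) (si (Sm f))" by (simp add: funpow_Suc_right del: funpow.simps)
  also have "\<dots> = (si ^^ m) f" using si_sm f by simp
  finally show ?thesis using False m m2 unfolding pow_m_def
    by (cases "0 \<le> i + 1") auto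
qed

end

lemma exact_neg:
  assumes pa: "is_preadditive C" and g: "g \<in> Hom C Y Z"
  shows "exact_at C B f (Neg C g) = exact_at C B f g"
proof -
  have ng: "Neg C g \<in> Hom C Y Z" using neg_hom[OF pa g] .
  have "{h \<in> Hom C B Y. Comp C (Neg C g) h = Zero C B Z}
      = {h \<in> Hom C B Y. Comp C g h = Zero C B Z}"
  proof (rule Collect_cong)
    fix h show "(h \<in> Hom C B Y \<and> Comp C (Neg C g) h = Zero C B Z) = (h \<in> Hom C B Y \<and> Comp C g h = Zero C B Z)"
    proof (cases "h \<in> Hom C B Y")
      case True
      have e1: "Comp C (Neg C g) h = Neg C (Comp C g h)" using comp_neg_left[OF pa g True] .
      have e2: "(Neg C (Comp C g h) = Zero C B Z) = (Comp C g h = Zero C B Z)"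
        using neg_eq_zero_iff[OF pa comp_hom[OF pa True g]] .
      show ?thesis unfolding e1 e2 by simp
    qed simp
  qed
  hence "{h \<in> Hom C B (Dom C (Neg C g)). Comp C (Neg C g) h = Zero C B (Cod C (Neg C g))}
      = {h \<in> Hom C B (Dom C g). Comp C g h = Zero C B (Cod C g)}"
    using hom_dom[OF ng] hom_cod[OF ng] hom_dom[OF g] hom_cod[OF g] by simp
  thus ?thesis unfolding exact_at_def by simp
qed

lemma PP_neg: assumes pa: "is_preadditive C" and P: "PP C f (Neg C g)" and gm: "g \<in> Mor C"
  shows "PP C f g"
proof -
  obtain X Y Z where f: "f \<in> Hom C X Y" and ng: "Neg C g \<in> Hom C Y Z"
    and ex: "\<forall>B\<in>Ob C. exact_at C B f (Neg C g)" using P unfolding PP_def by blast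
  have g0: "g \<in> Hom C (Dom C g) (Cod C g)" using mor_hom[OF gm] .
  have "Neg C g \<in> Hom C (Dom C g) (Cod C g)" using neg_hom[OF pa g0] .
  hence "Dom C g = Y" "Cod C g = Z" using hom_dom[OF ng] hom_cod[OF ng] hom_dom hom_cod by metis+
  hence g: "g \<in> Hom C Y Z" using g0 by simp
  have "\<forall>B\<in>Ob C. exact_at C B f g" using ex exact_neg[OF pa g] by simp
  thus ?thesis unfolding PP_def using f g by blast
qed


lemma nm_sq: "nseq_morphism C Sm n (A, \<alpha>) (B, \<beta>) \<phi> \<Longrightarrow> k + 1 < n \<Longrightarrow>
   Comp C (\<phi> ! (k + 1)) (\<alpha> ! k) = Comp C (\<beta> ! k) (\<phi> ! k)"
  unfolding nseq_morphism_def by simp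
lemma nm_hom: "nseq_morphism C Sm n (A, \<alpha>) (B, \<beta>) \<phi> \<Longrightarrow> k < n \<Longrightarrow>
   \<phi> ! k \<in> Hom C (A ! k) (B ! k)"
  unfolding nseq_morphism_def by simp
lemma nm_last: "nseq_morphism C Sm n (A, \<alpha>) (B, \<beta>) \<phi> \<Longrightarrow>
   Comp C (Sm (\<phi> ! 0)) (\<alpha> ! (n - 1)) = Comp C (\<beta> ! (n - 1)) (\<phi> ! (n - 1))"
  unfolding nseq_morphism_def by simp

context
  fixes C :: "('o, 'm) addcat" and So :: "'o \<Rightarrow> 'o" and Sm :: "'m \<Rightarrow> 'm"
    and n :: nat and N :: "('o, 'm) nseq set"
  assumes ac: "additive_category C"
    and aut: "automorphism C So Sm"
    and n3: "n \<ge> 3"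
    and isn: "\<forall>s \<in> N. is_nseq C So n s"
    and n1: "N1b C So n N"
    and n2: "N2star C So Sm n N"
    and n3ax: "N3 C Sm n N"
begin

abbreviation "rot \<equiv> left_rotation C So Sm n"
abbreviation "sg x \<equiv> (if even n then x else Neg C x)"

lemma pa: "is_preadditive C" using ac unfolding additive_category_def by blast
lemma zob: "ZObj C \<in> Ob C" using ac unfolding additive_category_def is_zero_object_def by blast

lemma rot_in: "s \<in> N \<Longrightarrow> (rot ^^ j) s \<in> N"
  by (induction j) (use n2 in \<open>auto simp: N2star_def\<close>)

lemma len: "s \<in> N \<Longrightarrow> length (fst s) = n \<and> length (snd s) = n"
proof -
  assume s: "s \<in> N"
  obtain A \<alpha> where se: "s = (A, \<alpha>)" by fastforce
  have "is_nseq C So n (A, \<alpha>)" using isn s se by blast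
  thus ?thesis using se unfolding is_nseq_def by simp
qed

lemma rot_nth: "s \<in> N \<Longrightarrow> i + j < n \<Longrightarrow> snd ((rot ^^ j) s) ! i = snd s ! (i + j)"
proof (induction j arbitrary: i)
  case 0 then show ?case by simp
next
  case (Suc j)
  obtain A \<beta> where t: "(rot ^^ j) s = (A, \<beta>)" by fastforce
  have l: "length \<beta> = n" using len[OF rot_in[OF Suc.prems(1), of j]] t by simp
  have il: "i < length (tl \<beta>)" using l Suc.prems by simp
  have "snd ((rot ^^ Suc j) s) ! i = (tl \<beta> @ [sg (Sm (\<beta> ! 0))]) ! i"
    using t by (simp add: left_rotation_def)
  also have "\<dots> = \<beta> ! (i + 1)" using l il by (simp add: nth_append nth_tl)
  also have "\<dots> = snd s ! (i + Suc j)" using Suc.IH[of "i+1"] Suc.prems t by simp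
  finally show ?case .
qed

lemma rot_last: assumes s: "s \<in> N"
  shows "1 \<le> j \<Longrightarrow> j \<le> n \<Longrightarrow> snd ((rot ^^ j) s) ! (n - j) = sg (Sm (snd s ! 0))"
proof (induction j)
  case 0 then show ?case by simp
next
  case (Suc j)
  show ?case
  proof (cases "j = 0")
    case True
    obtain A \<beta> where t: "s = (A, \<beta>)" by fastforce
    have l: "length \<beta> = n" using len[OF s] t by simp
    have ll: "length (tl \<beta>) = n - 1" using l by simp
    show ?thesis using t ll True by (simp add: left_rotation_def nth_append)
  next
    case False
    obtain A \<beta> where t: "(rot ^^ j) s = (A, \<beta>)" by fastforce
    have l: "length \<beta> = n" using len[OF rot_in[OF s, of j]] t by simp
    have il: "n - Suc j < length (tl \<beta>)" using l False Suc.prems by simp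
    have "snd ((rot ^^ Suc j) s) ! (n - Suc j) = (tl \<beta> @ [sg (Sm (\<beta> ! 0))]) ! (n - Suc j)"
      using t by (simp add: left_rotation_def)
    also have "\<dots> = \<beta> ! (n - j)" using l il Suc.prems by (simp add: nth_append nth_tl Suc_diff_Suc)
    also have "\<dots> = sg (Sm (snd s ! 0))" using Suc.IH Suc.prems False t by simp
    finally show ?thesis .
  qed
qed

lemma homs: assumes s: "(A, \<alpha>) \<in> N"
  shows "\<alpha> ! 0 \<in> Hom C (A ! 0) (A ! 1)" "\<alpha> ! 1 \<in> Hom C (A ! 1) (A ! 2)"
    "\<alpha> ! (n - 1) \<in> Hom C (A ! (n - 1)) (So (A ! 0))" "\<And>k. k < n \<Longrightarrow> A ! k \<in> Ob C"
proof -
  have ns: "is_nseq C So n (A, \<alpha>)" using isn s by blast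
  have H: "\<forall>k. k + 1 < n \<longrightarrow> \<alpha> ! k \<in> Hom C (A ! k) (A ! (k + 1))"
    and L: "\<alpha> ! (n - 1) \<in> Hom C (A ! (n - 1)) (So (A ! 0))" and O: "\<forall>k < n. A ! k \<in> Ob C"
    using ns unfolding is_nseq_def by simp_all
  have h0: "\<alpha> ! 0 \<in> Hom C (A ! 0) (A ! (0 + 1))" using H n3 by simp
  have h1: "\<alpha> ! 1 \<in> Hom C (A ! 1) (A ! (1 + 1))" using spec[OF H, of 1] n3 by simp
  show "\<alpha> ! 0 \<in> Hom C (A ! 0) (A ! 1)" using h0 by simp
  show "\<alpha> ! 1 \<in> Hom C (A ! 1) (A ! 2)" using h1 by (simp add: numeral_2_eq_2)
  show "\<alpha> ! (n - 1) \<in> Hom C (A ! (n - 1)) (So (A ! 0))" using L .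
  show "\<And>k. k < n \<Longrightarrow> A ! k \<in> Ob C" using O by simp
qed

lemma comp01: assumes s: "(A, \<alpha>) \<in> N"
  shows "Comp C (\<alpha> ! 1) (\<alpha> ! 0) = Zero C (A ! 0) (A ! 2)"
proof -
  have a0: "\<alpha> ! 0 \<in> Hom C (A ! 0) (A ! 1)" and A0: "A ! 0 \<in> Ob C" and A2: "A ! 2 \<in> Ob C"
    using homs[OF s] n3 by auto
  have T: "trivial_nseq C So n (A ! 0) \<in> N" using n1 A0 unfolding N1b_def by blast
  obtain TA T\<alpha> where Te: "trivial_nseq C So n (A ! 0) = (TA, T\<alpha>)" by fastforce
  have TA: "TA ! 0 = A ! 0" "TA ! 1 = A ! 0" "TA ! 2 = ZObj C" "T\<alpha> ! 0 = Id C (A ! 0)"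
     "T\<alpha> ! 1 = Zero C (A ! 0) (ZObj C)"
    using Te n3 unfolding trivial_nseq_def by (auto simp: nth_append)
  have i0: "Id C (A ! 0) \<in> Hom C (TA ! 0) (A ! 0)" using id_hom[OF pa A0] TA by simp
  have i1: "\<alpha> ! 0 \<in> Hom C (TA ! 1) (A ! 1)" using a0 TA by simp
  obtain \<phi> where \<phi>: "nseq_morphism C Sm n (TA, T\<alpha>) (A, \<alpha>) \<phi>" "\<phi> ! 0 = Id C (A ! 0)" "\<phi> ! 1 = \<alpha> ! 0"
    using n3ax T Te s i0 i1 unfolding N3_def
    by (metis TA(4) a0 id_right[OF pa])
  have p2: "\<phi> ! 2 \<in> Hom C (ZObj C) (A ! 2)" using nm_hom[OF \<phi>(1), of 2] n3 TA by simp
  have sq: "Comp C (\<phi> ! 2) (T\<alpha> ! 1) = Comp C (\<alpha> ! 1) (\<phi> ! 1)"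
    using nm_sq[OF \<phi>(1), of 1] n3 by (simp add: numeral_2_eq_2)
  show ?thesis using sq p2 TA \<phi>(3) comp_zero_right[OF pa p2 A0] by simp
qed

lemma core: assumes s: "(A, \<alpha>) \<in> N" and B: "B \<in> Ob C"
  shows "exact_at C B (\<alpha> ! 0) (\<alpha> ! 1)"
proof -
  have a0: "\<alpha> ! 0 \<in> Hom C (A ! 0) (A ! 1)" and a1: "\<alpha> ! 1 \<in> Hom C (A ! 1) (A ! 2)"
    and A0: "A ! 0 \<in> Ob C" and A2: "A ! 2 \<in> Ob C"
    using homs[OF s] n3 by auto
  have "{h \<in> Hom C B (A ! 1). Comp C (\<alpha> ! 1) h = Zero C B (A ! 2)} = (\<lambda>k. Comp C (\<alpha> ! 0) k) ` Hom C B (A ! 0)"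
  proof
    show "(\<lambda>k. Comp C (\<alpha> ! 0) k) ` Hom C B (A ! 0) \<subseteq> {h \<in> Hom C B (A ! 1). Comp C (\<alpha> ! 1) h = Zero C B (A ! 2)}"
    proof
      fix h assume "h \<in> (\<lambda>k. Comp C (\<alpha> ! 0) k) ` Hom C B (A ! 0)"
      then obtain k where k: "k \<in> Hom C B (A ! 0)" "h = Comp C (\<alpha> ! 0) k" by blast
      have "Comp C (\<alpha> ! 1) h = Comp C (Comp C (\<alpha> ! 1) (\<alpha> ! 0)) k" using comp_assoc[OF pa k(1) a0 a1] k by simp
      also have "\<dots> = Zero C B (A ! 2)" using comp01[OF s] comp_zero_left[OF pa k(1) A2] by simp
      finally show "h \<in> {h \<in> Hom C B (A ! 1). Comp C (\<alpha> ! 1) h = Zero C B (A ! 2)}"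
        using k comp_hom[OF pa k(1) a0] by simp
    qed
    show "{h \<in> Hom C B (A ! 1). Comp C (\<alpha> ! 1) h = Zero C B (A ! 2)} \<subseteq> (\<lambda>k. Comp C (\<alpha> ! 0) k) ` Hom C B (A ! 0)"
    proof
      fix h assume "h \<in> {h \<in> Hom C B (A ! 1). Comp C (\<alpha> ! 1) h = Zero C B (A ! 2)}"
      hence h: "h \<in> Hom C B (A ! 1)" and h0: "Comp C (\<alpha> ! 1) h = Zero C B (A ! 2)" by auto
      have T: "rot (trivial_nseq C So n B) \<in> N" using n1 n2 B unfolding N1b_def N2star_def by blast
      obtain TA T\<alpha> where Te: "rot (trivial_nseq C So n B) = (TA, T\<alpha>)" by fastforce
      have TA: "TA ! 0 = B" "TA ! 1 = ZObj C" "T\<alpha> ! 0 = Zero C B (ZObj C)"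
        "T\<alpha> ! (n - 1) = sg (Sm (Id C B))"
        using Te n3 unfolding trivial_nseq_def left_rotation_def by (auto simp: nth_append nth_tl)
      have S: "rot (A, \<alpha>) \<in> N" using n2 s unfolding N2star_def by blast
      obtain SA S\<alpha> where Se: "rot (A, \<alpha>) = (SA, S\<alpha>)" by fastforce
      have la: "length A = n" "length \<alpha> = n" using len[OF s] by auto
      have SA: "SA ! 0 = A ! 1" "SA ! 1 = A ! 2" "S\<alpha> ! 0 = \<alpha> ! 1" "S\<alpha> ! (n - 1) = sg (Sm (\<alpha> ! 0))"
        using Se n3 la unfolding left_rotation_def by (auto simp: nth_append nth_tl numeral_2_eq_2)
      have z: "Zero C (ZObj C) (A ! 2) \<in> Hom C (TA ! 1) (SA ! 1)" using zero_hom[OF pa zob A2] TA SA by simp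
      have hh: "h \<in> Hom C (TA ! 0) (SA ! 0)" using h TA SA by simp
      have cond: "Comp C (Zero C (ZObj C) (A ! 2)) (T\<alpha> ! 0) = Comp C (S\<alpha> ! 0) h"
        using TA SA h0 comp_zero_left[OF pa zero_hom[OF pa B zob] A2] by simp
      obtain \<phi> where \<phi>: "nseq_morphism C Sm n (TA, T\<alpha>) (SA, S\<alpha>) \<phi>" "\<phi> ! 0 = h"
        using n3ax T Te S Se z hh cond unfolding N3_def by metis
      have pl: "\<phi> ! (n - 1) \<in> Hom C (TA ! (n - 1)) (SA ! (n - 1))"
        using nm_hom[OF \<phi>(1), of "n - 1"] n3 by simp
      have sq: "Comp C (Sm (\<phi> ! 0)) (T\<alpha> ! (n - 1)) = Comp C (S\<alpha> ! (n - 1)) (\<phi> ! (n - 1))"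
        using nm_last[OF \<phi>(1)] .
      have TAl: "TA ! (n - 1) = So B" using Te n3 unfolding trivial_nseq_def left_rotation_def
        by (auto simp: nth_append)
      have SAl: "SA ! (n - 1) = So (A ! 0)" using Se n3 la unfolding left_rotation_def
        by (auto simp: nth_append)
      define p where "p = \<phi> ! (n - 1)"
      have p: "p \<in> Hom C (So B) (So (A ! 0))" using pl TAl SAl p_def by simp
      have shh: "Sm h \<in> Hom C (So B) (So (A ! 1))" using sm_hom[OF pa aut h] .
      have sa0: "Sm (\<alpha> ! 0) \<in> Hom C (So (A ! 0)) (So (A ! 1))" using sm_hom[OF pa aut a0] .
      have idb: "Sm (Id C B) = Id C (So B)" using sm_id[OF pa aut B] .
      have ib: "Id C (So B) \<in> Hom C (So B) (So B)" using id_hom[OF pa so_ob[OF pa aut B]] .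
      have eq: "Sm h = Comp C (Sm (\<alpha> ! 0)) p"
      proof (cases "even n")
        case True
        then show ?thesis using sq TA SA \<phi>(2) idb id_right[OF pa shh] p_def by simp
      next
        case False
        have "Neg C (Sm h) = Neg C (Comp C (Sm (\<alpha> ! 0)) p)"
          using sq TA SA \<phi>(2) idb False p_def comp_neg_right[OF pa shh ib] id_right[OF pa shh]
            comp_neg_left[OF pa sa0 p] by simp
        then show ?thesis using neg_neg[OF pa shh] neg_neg[OF pa comp_hom[OF pa p sa0]] by metis
      qed
      define k where "k = inv_into (Mor C) Sm p"
      have k: "k \<in> Hom C B (A ! 0)" using si_hom[OF pa aut p B A0] k_def by simp
      have sk: "Sm k = p" using si_mor[OF pa aut] hom_mor p k_def by metis
      have "Sm (Comp C (\<alpha> ! 0) k) = Sm h" using sm_comp[OF pa aut k a0] sk eq by simp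
      hence "Comp C (\<alpha> ! 0) k = h" using sm_inj[OF pa aut] hom_mor comp_hom[OF pa k a0] h by metis
      thus "h \<in> (\<lambda>k. Comp C (\<alpha> ! 0) k) ` Hom C B (A ! 0)" using k by blast
    qed
  qed
  thus ?thesis unfolding exact_at_def using hom_dom[OF a1] hom_cod[OF a1] hom_dom[OF a0] by simp
qed


lemma PPcore: "t \<in> N \<Longrightarrow> PP C (snd t ! 0) (snd t ! 1)"
proof -
  assume t: "t \<in> N"
  obtain A \<alpha> where te: "t = (A, \<alpha>)" by fastforce
  have tN: "(A, \<alpha>) \<in> N" using t te by simp
  have "\<alpha> ! 0 \<in> Hom C (A ! 0) (A ! 1) \<and> \<alpha> ! 1 \<in> Hom C (A ! 1) (A ! 2) \<and> (\<forall>B\<in>Ob C. exact_at C B (\<alpha> ! 0) (\<alpha> ! 1))"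
    using homs(1)[OF tN] homs(2)[OF tN] core[OF tN] by blast
  thus ?thesis unfolding PP_def using te by auto
qed

lemma main: assumes s: "s \<in> N" shows "exact_nseq C So Sm n s"
proof -
  obtain A \<alpha> where se: "s = (A, \<alpha>)" by fastforce
  have sN: "(A, \<alpha>) \<in> N" using s se by simp
  have a0: "\<alpha> ! 0 \<in> Mor C" using hom_mor[OF homs(1)[OF sN]] .
  have P1: "PP C (\<alpha> ! (n - 1)) (Sm (\<alpha> ! 0))"
  proof -
    have "PP C (snd ((rot ^^ (n - 1)) s) ! 0) (snd ((rot ^^ (n - 1)) s) ! 1)"
      using PPcore[OF rot_in[OF s]] .
    moreover have "snd ((rot ^^ (n - 1)) s) ! 0 = \<alpha> ! (n - 1)" using rot_nth[OF s, of 0 "n - 1"] n3 se by simp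
    moreover have "snd ((rot ^^ (n - 1)) s) ! 1 = sg (Sm (\<alpha> ! 0))" using rot_last[OF s, of "n - 1"] n3 se by simp
    ultimately have "PP C (\<alpha> ! (n - 1)) (sg (Sm (\<alpha> ! 0)))" by simp
    thus ?thesis
    proof (cases "even n")
      case True
      thus ?thesis using \<open>PP C (\<alpha> ! (n - 1)) (sg (Sm (\<alpha> ! 0)))\<close> by simp
    next
      case False
      hence "PP C (\<alpha> ! (n - 1)) (Neg C (Sm (\<alpha> ! 0)))" using \<open>PP C (\<alpha> ! (n - 1)) (sg (Sm (\<alpha> ! 0)))\<close> by simp
      thus ?thesis using PP_neg[OF pa _ sm_mor[OF pa aut a0]] by blast
    qed
  qed
  have P2: "PP C (\<alpha> ! (k - 1)) (\<alpha> ! k)" if "1 \<le> k" "k < n" for k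
  proof -
    have "PP C (snd ((rot ^^ (k - 1)) s) ! 0) (snd ((rot ^^ (k - 1)) s) ! 1)"
      using PPcore[OF rot_in[OF s]] .
    moreover have "snd ((rot ^^ (k - 1)) s) ! 0 = \<alpha> ! (k - 1)" using rot_nth[OF s, of 0 "k - 1"] that se by simp
    moreover have "snd ((rot ^^ (k - 1)) s) ! 1 = \<alpha> ! k" using rot_nth[OF s, of 1 "k - 1"] that se by simp
    ultimately show ?thesis by simp
  qed
  show ?thesis unfolding exact_nseq_def se
  proof (simp only: prod.case, intro ballI allI conjI impI)
    fix B i assume B: "B \<in> Ob C"
    have "PP C (pow_m C Sm (i - 1) (\<alpha> ! (n - 1))) (pow_m C Sm (i - 1) (Sm (\<alpha> ! 0)))"
      using PP_pow[OF pa aut P1] .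
    moreover have "pow_m C Sm (i - 1) (Sm (\<alpha> ! 0)) = pow_m C Sm i (\<alpha> ! 0)"
      using pow_m_shift[OF pa aut a0, of "i - 1"] by simp
    ultimately show "exact_at C B (pow_m C Sm (i - 1) (\<alpha> ! (n - 1))) (pow_m C Sm i (\<alpha> ! 0))"
      using B unfolding PP_def by auto
  next
    fix B i k assume B: "B \<in> Ob C" and k: "1 \<le> k \<and> k < n"
    show "exact_at C B (pow_m C Sm i (\<alpha> ! (k - 1))) (pow_m C Sm i (\<alpha> ! k))"
      using PP_pow[OF pa aut P2[of k]] k B unfolding PP_def by blast
  qed
qed

end
theorem lemma3p1:
  fixes C :: "('o, 'm) addcat" and So :: "'o \<Rightarrow> 'o" and Sm :: "'m \<Rightarrow> 'm"
    and n :: nat and N :: "('o, 'm) nseq set"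
  assumes "additive_category C"
    and "automorphism C So Sm"
    and "n \<ge> 3"
    and "\<forall>s \<in> N. is_nseq C So n s"
    and "N1b C So n N"
    and "N2star C So Sm n N"
    and "N3 C Sm n N"
    and "s \<in> N"
  shows "exact_nseq C So Sm n s"
  using main[OF assms(1-7)] assms(8) .

end
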